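(* Let $\mathcal{H}$ be a Hilbert space of finite dimension $d$, let $\mathcal{Z}$ be a finite set, let $\{p_z\}_{z\in\mathcal{Z}}$ be a fixed probability distribution on $\mathcal{Z}$, let $A^{(i)}_z$ ($i=1,\dots,R$, $z\in\mathcal{Z}$) be Hermitian operators on $\mathcal{H}$, and let $b_1,\dots,b_R\in\mathbb{R}$. Define the feasible set $$\mathcal{K}=\Big\{\textstyle\bigoplus_{z\in\mathcal{Z}}\rho_z \;\Big|\; \rho_z\in\mathcal{D}\ \forall z\in\mathcal{Z},\ \ \sum_{z\in\mathcal{Z}}p_z\operatorname{Tr}[A^{(i)}_z\rho_z]=b_i\ \ \forall i\in\{1,\dots,R\}\Big\},$$ viewed as a convex subset of the real vector space $\mathcal{M}=\bigoplus_{z\in\mathcal{Z}}\mathcal{B}(\mathcal{H})$ of block-diagonal matrices. Then every extreme point $\bigoplus_z\rho_z$ of $\mathcal{K}$ has at most $R$ blocks $\rho_z$ that are not pure states (i.e. at most $R$ labels $z$ for which $\rho_z$ is not of the form $|\phi\rangle\langle\phi|$).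
   Context: $\mathcal{D}$ denotes the set of density matrices on $\mathcal{H}$ (Hermitian, positive semi-definite, unit trace operators). An element $\bigoplus_z\rho_z$ is a collection of conditional states, one per label $z$, representing a quantum state ensemble $\{(p_z,\rho_z)\}$ with the probabilities $p_z$ held fixed. An extreme point of a convex set is an element that cannot be written as $\lambda x'+(1-\lambda)x''$ with $\lambda\in(0,1)$ and $x',x''$ in the set unless $x'=x''=x$. *)

theory Defs
  imports "HOL-Analysis.Analysis"
begin

text \<open>Operators on a d-dimensional Hilbert space are complex d x d matrices,
  with d = CARD('n) for a finite index type 'n.\<close>

definition conj_transpose :: "complex^'n^'m \<Rightarrow> complex^'m^'n" where
  "conj_transpose A = (\<chi> i j. cnj (A $ j $ i))"

definition hermitian :: "complex^'n^'n \<Rightarrow> bool" where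
  "hermitian A \<longleftrightarrow> conj_transpose A = A"

definition qform :: "complex^'n^'n \<Rightarrow> complex^'n \<Rightarrow> complex" where
  "qform A v = (\<Sum>i\<in>UNIV. cnj (v $ i) * (A *v v) $ i)"

definition psd :: "complex^'n^'n \<Rightarrow> bool" where
  "psd A \<longleftrightarrow> hermitian A \<and> (\<forall>v. 0 \<le> Re (qform A v))"

definition density :: "complex^'n^'n \<Rightarrow> bool" where
  "density \<rho> \<longleftrightarrow> hermitian \<rho> \<and> psd \<rho> \<and> trace \<rho> = 1"

definition ketbra :: "complex^'n \<Rightarrow> complex^'n^'n" where
  "ketbra \<phi> = (\<chi> i j. \<phi> $ i * cnj (\<phi> $ j))"

definition pure_state :: "complex^'n^'n \<Rightarrow> bool" where
  "pure_state \<rho> \<longleftrightarrow> (\<exists>\<phi>. \<rho> = ketbra \<phi>)"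

definition feasible ::
  "('z::finite \<Rightarrow> real) \<Rightarrow> (nat \<Rightarrow> 'z \<Rightarrow> complex^'n^'n) \<Rightarrow> (nat \<Rightarrow> real) \<Rightarrow> nat
     \<Rightarrow> ('z \<Rightarrow> complex^'n^'n) set" where
  "feasible p A b R = {\<rho>. (\<forall>z. density (\<rho> z)) \<and>
      (\<forall>i\<in>{1..R}. (\<Sum>z\<in>UNIV. complex_of_real (p z) * trace (A i z ** \<rho> z))
                    = complex_of_real (b i))}"

text \<open>Extreme point of a set of block-diagonal operators (real convex combinations,
  taken blockwise).\<close>
definition extreme_pt :: "('z \<Rightarrow> complex^'n^'n) set \<Rightarrow> ('z \<Rightarrow> complex^'n^'n) \<Rightarrow> bool" where
  "extreme_pt K x \<longleftrightarrow> x \<in> K \<and>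
     (\<forall>x1\<in>K. \<forall>x2\<in>K. \<forall>l::real. 0 < l \<and> l < 1 \<and>
        (\<forall>z. x z = l *\<^sub>R x1 z + (1 - l) *\<^sub>R x2 z) \<longrightarrow> x1 = x \<and> x2 = x)"

end

theory Submission
  imports Defs
begin

lemma herm_add: "hermitian A \<Longrightarrow> hermitian B \<Longrightarrow> hermitian (A + B)"
  by (simp add: hermitian_def conj_transpose_def vec_eq_iff)

lemma herm_diff: "hermitian A \<Longrightarrow> hermitian B \<Longrightarrow> hermitian (A - B)"
  by (simp add: hermitian_def conj_transpose_def vec_eq_iff)

lemma herm_scaleR: "hermitian A \<Longrightarrow> hermitian (r *\<^sub>R A)"
  by (simp add: hermitian_def conj_transpose_def vec_eq_iff)

lemma herm_ketbra: "hermitian (ketbra a)"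
  by (simp add: hermitian_def conj_transpose_def vec_eq_iff ketbra_def mult.commute)

lemma herm_entry: "hermitian A \<Longrightarrow> A $ j $ i = cnj (A $ i $ j)"
  by (metis (no_types, lifting) conj_transpose_def hermitian_def vec_lambda_beta)

lemma herm_diag_real: "hermitian A \<Longrightarrow> A $ i $ i = of_real (Re (A $ i $ i))"
proof -
  assume h: "hermitian A"
  have "Im (A $ i $ i) = Im (cnj (A $ i $ i))" using herm_entry[OF h, of i i] by (simp only:)
  then have "Im (A $ i $ i) = 0" by simp
  then show ?thesis by (simp add: complex_eq_iff)
qed

lemma trace_real: "hermitian A \<Longrightarrow> trace A = of_real (Re (trace A))"
proof -
  assume h: "hermitian A"
  have "trace A = (\<Sum>i\<in>UNIV. of_real (Re (A $ i $ i)))"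
    unfolding trace_def using herm_diag_real[OF h] by (metis (no_types, lifting))
  also have "\<dots> = of_real (Re (trace A))" by (simp add: trace_def)
  finally show ?thesis .
qed

lemma qform_add: "qform (A + B) v = qform A v + qform B v"
  by (simp add: qform_def matrix_vector_mult_def sum.distrib ring_distribs)

lemma qform_diff: "qform (A - B) v = qform A v - qform B v"
  by (simp add: qform_def matrix_vector_mult_def sum_subtractf ring_distribs)

lemma qform_scaleR: "qform (r *\<^sub>R A) v = of_real r * qform A v"
  by (simp add: qform_def matrix_vector_mult_def sum_distrib_left scaleR_conv_of_real[symmetric] algebra_simps)

lemma psd_add: "psd A \<Longrightarrow> psd B \<Longrightarrow> psd (A + B)"
  by (simp add: psd_def herm_add qform_add)

lemma psd_scaleR: "psd A \<Longrightarrow> 0 \<le> r \<Longrightarrow> psd (r *\<^sub>R A)"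
  by (simp add: psd_def herm_scaleR qform_scaleR)

lemma trace_scaleR: "trace (r *\<^sub>R (A::complex^'n^'n)) = r *\<^sub>R trace A"
  by (simp add: trace_def scaleR_sum_right)

lemma mvaxis: "(A *v axis k t) $ i = A $ i $ k * t"
proof -
  have "(A *v axis k t) $ i = (\<Sum>j\<in>UNIV. if j = k then A $ i $ j * t else 0)"
    unfolding matrix_vector_mult_def vec_lambda_beta by (rule sum.cong) (auto simp: axis_def)
  then show ?thesis by simp
qed

lemma qform_expand:
  "qform A (v + axis k t) = qform A v + t * (\<Sum>i\<in>UNIV. cnj (v $ i) * A $ i $ k)
     + cnj t * (A *v v) $ k + cnj t * t * A $ k $ k"
proof -
  have "qform A (v + axis k t) = (\<Sum>i\<in>UNIV. cnj (v $ i + axis k t $ i) * ((A *v v) $ i + A $ i $ k * t))"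
    unfolding qform_def by (simp add: matrix_vector_right_distrib mvaxis)
  also have "\<dots> = (\<Sum>i\<in>UNIV. cnj (v $ i) * (A *v v) $ i + t * (cnj (v $ i) * A $ i $ k)
       + (if i = k then cnj t * (A *v v) $ k + cnj t * t * A $ k $ k else 0))"
    by (rule sum.cong) (auto simp: axis_def algebra_simps)
  also have "\<dots> = qform A v + t * (\<Sum>i\<in>UNIV. cnj (v $ i) * A $ i $ k)
     + cnj t * (A *v v) $ k + cnj t * t * A $ k $ k"
    by (simp add: sum.distrib sum_distrib_left qform_def)
  finally show ?thesis .
qed

lemma qform_axis: "qform A (axis k 1) = A $ k $ k"
  using qform_expand[of A 0 k 1] by (simp add: qform_def)

lemma psd_diag: "psd A \<Longrightarrow> 0 \<le> Re (A $ k $ k)"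
  by (metis psd_def qform_axis)


lemma herm_col_sum:
  assumes "hermitian A"
  shows "(\<Sum>i\<in>UNIV. cnj (v $ i) * A $ i $ k) = cnj ((A *v v) $ k)"
  unfolding matrix_vector_mult_def
  by (simp add: herm_entry[OF assms, of k] mult.commute)

lemma schur:
  assumes "psd A" "A $ k $ k = of_real r" "r > 0"
  shows "(cmod ((A *v v) $ k))^2 / r \<le> Re (qform A v)"
proof -
  define s where "s = (A *v v) $ k"
  define t where "t = - s / of_real r"
  have h: "hermitian A" using assms(1) psd_def by auto
  have "qform A (v + axis k t) = qform A v + t * cnj s + cnj t * s + cnj t * t * of_real r"
    using qform_expand[of A v k t] herm_col_sum[OF h, of v k] assms(2) s_def by simp
  also have "\<dots> = qform A v - (s * cnj s) / of_real r"
    using assms(3) unfolding t_def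
    by (simp add: field_simps)
  also have "s * cnj s = of_real ((cmod s)^2)"
    by (metis complex_norm_square of_real_power)
  also have "qform A v - of_real ((cmod s)^2) / of_real r = qform A v - of_real ((cmod s)^2 / r)"
    by simp
  finally have "0 \<le> Re (qform A v - of_real ((cmod s)^2 / r))"
    using assms(1) unfolding psd_def by metis
  then show ?thesis by (simp add: s_def)
qed


lemma qform_ketbra: "qform (ketbra a) v = cnj (\<Sum>j\<in>UNIV. cnj (a $ j) * v $ j) * (\<Sum>j\<in>UNIV. cnj (a $ j) * v $ j)"
proof -
  have "qform (ketbra a) v = (\<Sum>i\<in>UNIV. cnj (v $ i) * a $ i * (\<Sum>j\<in>UNIV. cnj (a $ j) * v $ j))"
    unfolding qform_def matrix_vector_mult_def ketbra_def
    by (simp add: sum_distrib_left mult_ac)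
  also have "\<dots> = (\<Sum>i\<in>UNIV. cnj (v $ i) * a $ i) * (\<Sum>j\<in>UNIV. cnj (a $ j) * v $ j)"
    by (simp add: sum_distrib_right)
  finally show ?thesis by (simp add: mult_ac)
qed

lemma Re_cnj_mult: "Re (cnj z * z) = (cmod z)^2"
  by (metis Re_complex_of_real complex_norm_square mult.commute of_real_power)

lemma psd_ketbra: "psd (ketbra a)"
  unfolding psd_def using herm_ketbra qform_ketbra Re_cnj_mult by (metis zero_le_power2)

lemma ketbra_scaleR: "ketbra (c *\<^sub>R a) = (c * c) *\<^sub>R ketbra a"
  by (simp add: ketbra_def vec_eq_iff)

lemma psd_trace_nonneg: "psd A \<Longrightarrow> 0 \<le> Re (trace A)"
  unfolding trace_def by (simp add: Re_sum sum_nonneg psd_diag)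

lemma psd_convex:
  assumes "psd (A + H)" "psd (A - H)" "\<bar>t\<bar> \<le> 1"
  shows "psd (A + t *\<^sub>R H)"
proof -
  have e: "((1 + t) / 2) *\<^sub>R (A + H) + ((1 - t) / 2) *\<^sub>R (A - H)
      = ((1 + t) / 2 + (1 - t) / 2) *\<^sub>R A + ((1 + t) / 2 - (1 - t) / 2) *\<^sub>R H"
    by (simp add: scaleR_add_right scaleR_diff_right scaleR_add_left scaleR_diff_left algebra_simps)
  have c1: "(1 + t) / 2 + (1 - t) / 2 = (1::real)" by (simp add: field_simps)
  have c2: "(1 + t) / 2 - (1 - t) / 2 = t" by (simp add: field_simps)
  have "A + t *\<^sub>R H = ((1 + t) / 2) *\<^sub>R (A + H) + ((1 - t) / 2) *\<^sub>R (A - H)"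
    unfolding e c1 c2 by simp
  moreover have "psd (((1 + t) / 2) *\<^sub>R (A + H))" using assms by (intro psd_scaleR) auto
  moreover have "psd (((1 - t) / 2) *\<^sub>R (A - H))" using assms by (intro psd_scaleR) auto
  ultimately show ?thesis using psd_add by metis
qed


lemma perturb:
  assumes dens: "density \<rho>" and np: "\<not> pure_state \<rho>"
  shows "\<exists>H. hermitian H \<and> trace H = 0 \<and> H \<noteq> 0 \<and> psd (\<rho> + H) \<and> psd (\<rho> - H)"
proof -
  have h: "hermitian \<rho>" and ps: "psd \<rho>" and tr: "trace \<rho> = 1"
    using dens by (auto simp: density_def)
  have "\<exists>k. 0 < Re (\<rho> $ k $ k)"
  proof (rule ccontr)
    assume "\<not> ?thesis"
    then have "Re (trace \<rho>) \<le> 0" unfolding trace_def by (simp add: Re_sum sum_nonpos not_less)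
    with tr show False by simp
  qed
  then obtain k where kpos: "0 < Re (\<rho> $ k $ k)" by blast
  define r where "r = Re (\<rho> $ k $ k)"
  have rpos: "r > 0" using kpos r_def by simp
  have rkk: "\<rho> $ k $ k = of_real r" using herm_diag_real[OF h] r_def by simp
  define a where "a = (\<chi> i. \<rho> $ i $ k)"
  define P where "P = (1 / r) *\<^sub>R ketbra a"
  define D where "D = \<rho> - P"
  have psdP: "psd P" unfolding P_def using rpos by (intro psd_scaleR psd_ketbra) auto
  have hP: "hermitian P" using psdP psd_def by auto
  have hD: "hermitian D" unfolding D_def using h hP by (rule herm_diff)
  have psdD: "psd D"
    unfolding psd_def
  proof (intro conjI allI hD)
    fix v
    have sig: "(\<Sum>j\<in>UNIV. cnj (a $ j) * v $ j) = (\<rho> *v v) $ k"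
      unfolding a_def matrix_vector_mult_def using herm_entry[OF h, of k, symmetric] by simp
    have "Re (qform D v) = Re (qform \<rho> v) - (1 / r) * Re (qform (ketbra a) v)"
      unfolding D_def P_def by (simp add: qform_diff qform_scaleR)
    also have "Re (qform (ketbra a) v) = (cmod ((\<rho> *v v) $ k))^2"
      unfolding qform_ketbra sig by (rule Re_cnj_mult)
    finally have "Re (qform D v) = Re (qform \<rho> v) - (cmod ((\<rho> *v v) $ k))^2 / r" by simp
    then show "0 \<le> Re (qform D v)" using schur[OF ps rkk rpos, of v] by simp
  qed
  have "P $ k $ k = (1 / r) *\<^sub>R (\<rho> $ k $ k * cnj (\<rho> $ k $ k))"
    unfolding P_def ketbra_def a_def by simp
  then have Pkk: "P $ k $ k = of_real r"
    using rkk rpos by (simp add: scaleR_conv_of_real)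
  have Dkk: "D $ k $ k = 0" unfolding D_def using Pkk rkk by simp
  define \<alpha> where "\<alpha> = Re (trace D)"
  define \<beta> where "\<beta> = Re (trace P)"
  have trD: "trace D = of_real \<alpha>" unfolding \<alpha>_def using trace_real[OF hD] .
  have trP: "trace P = of_real \<beta>" unfolding \<beta>_def using trace_real[OF hP] .
  have rho_eq: "\<rho> = P + D" unfolding D_def by simp
  have ab: "\<alpha> + \<beta> = 1"
  proof -
    have "trace \<rho> = trace P + trace D" using rho_eq trace_add by metis
    then have "of_real (\<alpha> + \<beta>) = (1::complex)" using tr trD trP by (simp add: add.commute)
    then show ?thesis using of_real_eq_1_iff by blast
  qed
  have a0: "0 \<le> \<alpha>" unfolding \<alpha>_def by (rule psd_trace_nonneg[OF psdD])
  have b0: "0 \<le> \<beta>" unfolding \<beta>_def by (rule psd_trace_nonneg[OF psdP])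
  define H where "H = \<alpha> *\<^sub>R P - \<beta> *\<^sub>R D"
  have hH: "hermitian H" unfolding H_def using hP hD by (intro herm_diff herm_scaleR)
  have trH: "trace H = 0"
    unfolding H_def using trD trP by (simp add: trace_sub trace_scaleR) (simp add: scaleR_conv_of_real)
  have plus: "\<rho> + H = (1 + \<alpha>) *\<^sub>R P + (1 - \<beta>) *\<^sub>R D"
    unfolding H_def rho_eq by (simp add: algebra_simps)
  have minus: "\<rho> - H = (1 - \<alpha>) *\<^sub>R P + (1 + \<beta>) *\<^sub>R D"
    unfolding H_def rho_eq by (simp add: algebra_simps)
  have psd1: "psd (\<rho> + H)" unfolding plus using a0 b0 ab psdP psdD
    by (intro psd_add psd_scaleR) auto
  have psd2: "psd (\<rho> - H)" unfolding minus using a0 b0 ab psdP psdD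
    by (intro psd_add psd_scaleR) auto
  have Dne: "D \<noteq> 0"
  proof
    assume "D = 0"
    then have "\<rho> = P" using rho_eq by simp
    also have "P = ketbra ((1 / sqrt r) *\<^sub>R a)"
      unfolding P_def ketbra_scaleR using rpos
      by (simp add: real_sqrt_mult[symmetric])
    finally show False using np pure_state_def by blast
  qed
  have Hne: "H \<noteq> 0"
  proof
    assume H0: "H = 0"
    then have "H $ k $ k = 0" by simp
    then have "\<alpha> * r = 0" unfolding H_def using Pkk Dkk
      by simp
    then have "\<alpha> = 0" using rpos by simp
    then have "\<beta> = 1" using ab by simp
    then have "D = 0" using H0 \<open>\<alpha> = 0\<close> unfolding H_def by simp
    with Dne show False by simp
  qed
  show ?thesis using hH trH Hne psd1 psd2 by blast
qed


lemma trace_mult_real: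
  assumes "hermitian A" "hermitian B"
  shows "trace (A ** B) = of_real (Re (trace (A ** B)))"
proof -
  have "cnj (trace (A ** B)) = trace (B ** A)"
    unfolding trace_def matrix_matrix_mult_def
    using herm_entry[OF assms(1), symmetric] herm_entry[OF assms(2), symmetric]
    by (simp add: mult.commute)
  also have "\<dots> = trace (A ** B)" by (rule trace_mul_sym[symmetric])
  finally have e: "cnj (trace (A ** B)) = trace (A ** B)" .
  have "Im (cnj (trace (A ** B))) = Im (trace (A ** B))" by (simp only: e)
  then have "Im (trace (A ** B)) = 0" by simp
  then show ?thesis by (simp add: complex_eq_iff)
qed

lemma trace_mult_scaleR: "trace (A ** (r *\<^sub>R B)) = r *\<^sub>R trace (A ** (B::complex^'n^'n))"
  unfolding trace_def matrix_matrix_mult_def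
  by (simp add: scaleR_sum_right)

lemma trace_mult_add: "trace (A ** (B + C)) = trace (A ** B) + trace (A ** (C::complex^'n^'n))"
  by (simp add: matrix_add_ldistrib trace_add)

lemma lin_dep:
  fixes g :: "'a \<Rightarrow> nat \<Rightarrow> real"
  shows "finite N \<Longrightarrow> m < card N \<Longrightarrow>
    \<exists>c. (\<exists>z\<in>N. c z \<noteq> 0) \<and> (\<forall>i\<in>{1..m}. (\<Sum>z\<in>N. c z * g z i) = 0)"
proof (induction m arbitrary: N g)
  case 0
  then have "N \<noteq> {}" by auto
  then obtain z where "z \<in> N" by blast
  then show ?case by (intro exI[of _ "\<lambda>_. 1"]) auto
next
  case (Suc m)
  show ?case
  proof (cases "\<forall>z\<in>N. g z (Suc m) = 0")
    case True
    have mN: "m < card N" using Suc.prems by simp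
    obtain c where
      c: "\<exists>z\<in>N. c z \<noteq> 0" "\<forall>i\<in>{1..m}. (\<Sum>z\<in>N. c z * g z i) = 0"
      using Suc.IH[OF Suc.prems(1) mN, of g] by blast
    have "\<forall>i\<in>{1..Suc m}. (\<Sum>z\<in>N. c z * g z i) = 0"
    proof
      fix i assume "i \<in> {1..Suc m}"
      then consider "i \<in> {1..m}" | "i = Suc m" by fastforce
      then show "(\<Sum>z\<in>N. c z * g z i) = 0"
      proof cases
        case 1 then show ?thesis using c(2) by blast
      next
        case 2 then show ?thesis using True by simp
      qed
    qed
    with c show ?thesis by blast
  next
    case False
    then obtain z0 where z0: "z0 \<in> N" "g z0 (Suc m) \<noteq> 0" by blast
    define N' where "N' = N - {z0}"
    define g' where "g' = (\<lambda>z i. g z i - g z (Suc m) / g z0 (Suc m) * g z0 i)"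
    have fin: "finite N'" using Suc.prems N'_def by auto
    have cardN': "m < card N'" using Suc.prems z0 N'_def by (simp add: card_Diff_singleton)
    obtain c' where c': "\<exists>z\<in>N'. c' z \<noteq> 0" "\<forall>i\<in>{1..m}. (\<Sum>z\<in>N'. c' z * g' z i) = 0"
      using Suc.IH[OF fin cardN', of g'] by blast
    define c where "c = (\<lambda>z. if z = z0 then - (\<Sum>w\<in>N'. c' w * (g w (Suc m) / g z0 (Suc m))) else c' z)"
    have key: "(\<Sum>z\<in>N. c z * g z i) = (\<Sum>z\<in>N'. c' z * g' z i)" for i
    proof -
      have "(\<Sum>z\<in>N. c z * g z i) = c z0 * g z0 i + (\<Sum>z\<in>N'. c z * g z i)"
        using Suc.prems(1) z0 N'_def by (simp add: sum.remove)
      also have "(\<Sum>z\<in>N'. c z * g z i) = (\<Sum>z\<in>N'. c' z * g z i)"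
        using N'_def c_def by (intro sum.cong) auto
      also have "c z0 * g z0 i = - (\<Sum>w\<in>N'. c' w * (g w (Suc m) / g z0 (Suc m) * g z0 i))"
        by (simp add: c_def sum_distrib_right mult.assoc)
      also have "- (\<Sum>w\<in>N'. c' w * (g w (Suc m) / g z0 (Suc m) * g z0 i)) + (\<Sum>z\<in>N'. c' z * g z i)
          = (\<Sum>z\<in>N'. c' z * g' z i)"
        by (simp add: g'_def sum_subtractf right_diff_distrib)
      finally show ?thesis .
    qed
    have "\<exists>z\<in>N. c z \<noteq> 0" using c'(1) N'_def c_def by auto
    moreover have "\<forall>i\<in>{1..Suc m}. (\<Sum>z\<in>N. c z * g z i) = 0"
    proof
      fix i assume "i \<in> {1..Suc m}"
      then consider "i \<in> {1..m}" | "i = Suc m" by fastforce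
      then show "(\<Sum>z\<in>N. c z * g z i) = 0"
      proof cases
        case 1 then show ?thesis using key c'(2) by simp
      next
        case 2 then show ?thesis using key z0(2) by (simp add: g'_def)
      qed
    qed
    ultimately show ?thesis by blast
  qed
qed


lemma half_comb: "(1/2::real) *\<^sub>R (u + a *\<^sub>R h) + (1 - 1/2::real) *\<^sub>R (u + (- a) *\<^sub>R h) = (u::'a::real_vector)"
  by (simp add: algebra_simps scaleR_add_left[symmetric])

theorem theorem1:
  fixes p :: "'z::finite \<Rightarrow> real"
    and A :: "nat \<Rightarrow> 'z \<Rightarrow> complex^'n^'n"
    and b :: "nat \<Rightarrow> real"
    and R :: nat
    and \<rho> :: "'z \<Rightarrow> complex^'n^'n"
  assumes p_nonneg: "\<And>z. 0 \<le> p z"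
    and p_sum: "(\<Sum>z\<in>UNIV. p z) = 1"
    and A_herm: "\<And>i z. i \<in> {1..R} \<Longrightarrow> hermitian (A i z)"
    and ext: "extreme_pt (feasible p A b R) \<rho>"
  shows "card {z. \<not> pure_state (\<rho> z)} \<le> R"
proof (rule ccontr)
  assume "\<not> ?thesis"
  then have cardN: "R < card {z. \<not> pure_state (\<rho> z)}" by simp
  define N where "N = {z. \<not> pure_state (\<rho> z)}"
  have rhoK: "\<rho> \<in> feasible p A b R" using ext unfolding extreme_pt_def by (rule conjunct1)
  have rhoK': "(\<forall>z. density (\<rho> z)) \<and>
      (\<forall>i\<in>{1..R}. (\<Sum>z\<in>UNIV. complex_of_real (p z) * trace (A i z ** \<rho> z))
                    = complex_of_real (b i))"
    using rhoK unfolding feasible_def by (rule CollectD)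
  have dens: "\<And>z. density (\<rho> z)" using rhoK' by blast
  have cons: "\<And>i. i \<in> {1..R} \<Longrightarrow> (\<Sum>z\<in>UNIV. complex_of_real (p z) * trace (A i z ** \<rho> z))
                    = complex_of_real (b i)" using rhoK' by blast
  define P where "P = (\<lambda>z H. hermitian H \<and> trace H = 0 \<and> H \<noteq> 0 \<and> psd (\<rho> z + H) \<and> psd (\<rho> z - H))"
  have exH: "\<exists>H. P z H" if "z \<in> N" for z
  proof -
    have "\<not> pure_state (\<rho> z)" using that N_def by simp
    then show ?thesis unfolding P_def by (rule perturb[OF dens])
  qed
  define H where "H = (\<lambda>z. SOME H. P z H)"
  have H: "hermitian (H z) \<and> trace (H z) = 0 \<and> H z \<noteq> 0
      \<and> psd (\<rho> z + H z) \<and> psd (\<rho> z - H z)" if "z \<in> N" for z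
    using someI_ex[OF exH[OF that]] unfolding H_def P_def .
  define g where "g = (\<lambda>z i. p z * Re (trace (A i z ** H z)))"
  have finN: "finite N" by simp
  have cardN': "R < card N" using cardN N_def by simp
  obtain c where c: "\<exists>z\<in>N. c z \<noteq> 0" "\<forall>i\<in>{1..R}. (\<Sum>z\<in>N. c z * g z i) = 0"
    using lin_dep[OF finN cardN', of g] by blast
  then obtain z1 where z1: "z1 \<in> N" "c z1 \<noteq> 0" by blast
  define M where "M = Max ((\<lambda>z. \<bar>c z\<bar>) ` N)"
  have Mge: "\<And>z. z \<in> N \<Longrightarrow> \<bar>c z\<bar> \<le> M" unfolding M_def by auto
  have Mpos: "M > 0" using Mge[OF z1(1)] z1(2) by linarith
  define d where "d = (\<lambda>z. if z \<in> N then c z / M else 0)"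
  have dle: "\<bar>d z\<bar> \<le> 1" for z
    using Mge Mpos by (auto simp: d_def abs_div)
  define x where "x = (\<lambda>s::real. \<lambda>z. \<rho> z + (s * d z) *\<^sub>R H z)"
  have feas: "x s \<in> feasible p A b R" if s: "\<bar>s\<bar> \<le> 1" for s
  proof -
    have dx: "density (x s z)" for z
    proof (cases "z \<in> N")
      case True
      have "\<bar>s * d z\<bar> \<le> 1" using s dle[of z] by (simp add: abs_mult mult_le_one)
      then have "psd (x s z)" unfolding x_def using H[OF True] psd_convex by blast
      moreover have "hermitian (x s z)" unfolding x_def using H[OF True] dens[of z]
        by (intro herm_add herm_scaleR) (auto simp: density_def)
      moreover have "trace (x s z) = 1" unfolding x_def using H[OF True] dens[of z]
        by (simp add: trace_add trace_scaleR density_def)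
      ultimately show ?thesis by (simp add: density_def)
    next
      case False
      then show ?thesis using dens[of z] by (simp add: x_def d_def)
    qed
    have cx: "(\<Sum>z\<in>UNIV. complex_of_real (p z) * trace (A i z ** x s z)) = complex_of_real (b i)"
      if i: "i \<in> {1..R}" for i
    proof -
      have "(\<Sum>z\<in>UNIV. complex_of_real (p z) * trace (A i z ** x s z))
          = (\<Sum>z\<in>UNIV. complex_of_real (p z) * trace (A i z ** \<rho> z))
            + (\<Sum>z\<in>UNIV. complex_of_real (p z) * ((s * d z) *\<^sub>R trace (A i z ** H z)))"
        unfolding x_def by (simp add: trace_mult_add trace_mult_scaleR sum.distrib ring_distribs)
      also have "(\<Sum>z\<in>UNIV. complex_of_real (p z) * ((s * d z) *\<^sub>R trace (A i z ** H z)))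
          = (\<Sum>z\<in>UNIV. complex_of_real (s / M * (if z \<in> N then c z * g z i else 0)))"
      proof (rule sum.cong[OF refl])
        fix z
        show "complex_of_real (p z) * ((s * d z) *\<^sub>R trace (A i z ** H z))
            = complex_of_real (s / M * (if z \<in> N then c z * g z i else 0))"
        proof (cases "z \<in> N")
          case True
          define \<tau> where "\<tau> = Re (trace (A i z ** H z))"
          have tr: "trace (A i z ** H z) = of_real \<tau>"
            unfolding \<tau>_def by (rule trace_mult_real[OF A_herm[OF i] conjunct1[OF H[OF True]]])
          have gz: "g z i = p z * \<tau>" unfolding g_def \<tau>_def ..
          show ?thesis unfolding tr gz using True
            by (simp add: d_def scaleR_conv_of_real)
        qed (simp add: d_def)
      qed
      also have "\<dots> = of_real (s / M * (\<Sum>z\<in>N. c z * g z i))"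
      proof -
        have "(\<Sum>z\<in>UNIV. complex_of_real (s / M * (if z \<in> N then c z * g z i else 0)))
            = of_real (\<Sum>z\<in>UNIV. s / M * (if z \<in> N then c z * g z i else 0))"
          by (simp only: of_real_sum)
        also have "(\<Sum>z\<in>UNIV. s / M * (if z \<in> N then c z * g z i else 0))
            = (\<Sum>z\<in>UNIV. (if z \<in> N then s / M * (c z * g z i) else 0))"
          by (rule sum.cong) auto
        also have "\<dots> = (\<Sum>z\<in>N. s / M * (c z * g z i))"
          using sum.inter_restrict[of UNIV "\<lambda>z. s / M * (c z * g z i)" N] by simp
        also have "\<dots> = s / M * (\<Sum>z\<in>N. c z * g z i)"
          by (simp add: sum_distrib_left)
        finally show ?thesis .
      qed
      also have "\<dots> = 0" using c(2) i by simp
      finally show ?thesis using cons[OF i] by simp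
    qed
    show ?thesis unfolding feasible_def mem_Collect_eq
      by (intro conjI allI ballI dx cx)
  qed
  have x1eq: "x 1 = (\<lambda>z. \<rho> z + d z *\<^sub>R H z)" by (simp add: x_def)
  have x2eq: "x (-1) = (\<lambda>z. \<rho> z + (- d z) *\<^sub>R H z)" by (simp add: x_def)
  have mid: "\<forall>z. \<rho> z = (1/2::real) *\<^sub>R x 1 z + (1 - 1/2::real) *\<^sub>R x (-1) z"
    unfolding x1eq x2eq by (simp only: half_comb) simp
  have mid': "0 < (1/2::real) \<and> (1/2::real) < 1 \<and>
      (\<forall>z. \<rho> z = (1/2::real) *\<^sub>R x 1 z + (1 - 1/2::real) *\<^sub>R x (-1) z)"
  proof (intro conjI)
    show "0 < (1/2::real)" by simp
    show "(1/2::real) < 1" by simp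
  qed (rule mid)
  have extr: "\<forall>x1\<in>feasible p A b R. \<forall>x2\<in>feasible p A b R. \<forall>l::real. 0 < l \<and> l < 1 \<and>
        (\<forall>z. \<rho> z = l *\<^sub>R x1 z + (1 - l) *\<^sub>R x2 z) \<longrightarrow> x1 = \<rho> \<and> x2 = \<rho>"
    using ext unfolding extreme_pt_def by (rule conjunct2)
  have f1: "x 1 \<in> feasible p A b R" by (rule feas) simp
  have f2: "x (-1) \<in> feasible p A b R" by (rule feas) simp
  have "x 1 = \<rho> \<and> x (-1) = \<rho>"
    using extr[rule_format, OF f1 f2 mid'] .
  then have "x 1 = \<rho>" by (rule conjunct1)
  have e1: "\<rho> z1 + (1 * d z1) *\<^sub>R H z1 = \<rho> z1"
    using fun_cong[OF \<open>x 1 = \<rho>\<close>, of z1] unfolding x_def .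
  have e2: "d z1 *\<^sub>R H z1 = 0" using e1 by (metis add_cancel_left_right mult_1)
  have Hz: "H z1 \<noteq> 0" using H[OF z1(1)] by blast
  have cM: "c z1 / M \<noteq> 0" using z1(2) Mpos by simp
  have dz: "d z1 = c z1 / M" unfolding d_def using z1(1) by (rule if_P)
  from e2 have "d z1 = 0 \<or> H z1 = 0" by (simp only: scaleR_eq_0_iff)
  then show False
  proof
    assume "d z1 = 0"
    then have "c z1 / M = 0" unfolding dz .
    with cM show False by (rule notE)
  next
    assume "H z1 = 0"
    with Hz show False by (rule notE)
  qed
qed

end
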